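(* Let $d\ge 1$, $\bar{\alpha}>2$ and $\beta_k>0$. Consider the hierarchical model for a random vector $\mathbf{x}_k\in\mathbb{R}^d$ in which $\gamma_k>0$ follows a Gamma distribution with shape $\bar{\alpha}$ and rate $\beta_k$ (density $\frac{\beta_k^{\bar\alpha}}{\Gamma(\bar\alpha)}\gamma_k^{\bar\alpha-1}e^{-\beta_k\gamma_k}$), and, conditionally on $\gamma_k$, $\mathbf{x}_k$ has the density $p(\mathbf{x}_k\mid\gamma_k)=\left(\frac{\gamma_k}{2}\right)^d\exp\left(-\gamma_k\|\mathbf{x}_k\|_1\right)$, where $\|\mathbf{x}_k\|_1=\sum_{i=1}^d|x_{k,i}|$. Then the marginal density of $\mathbf{x}_k$ satisfies $p(\mathbf{x}_k)\propto(\|\mathbf{x}_k\|_1+\beta_k)^{-(d+\bar\alpha)}$, and $$\mathbb{E}\left[\mathbf{x}_k\mathbf{x}_k^\top\right]=\frac{2\beta_k^2}{(\bar\alpha-1)(\bar\alpha-2)}I_d .$$ Consequently, for given $\mathrm{SNR}>1$, positive semidefinite nonzero $\Gamma_\xi\in\mathbb{R}^{m\times m}$, integer $q\ge1$ and nonzero $L_k\in\mathbb{R}^{m\times d}$, the requirement $\mathbb{E}[\mathbf{x}_k\mathbf{x}_k^\top]=\theta_k I_d$ with $\theta_k=\frac{(\mathrm{SNR}-1)\,\mathrm{trace}(\Gamma_\xi)}{q\|L_k\|_F^2}$ holds if and only if $$\beta_k=\sqrt{\frac{(\bar\alpha-1)(\bar\alpha-2)(\mathrm{SNR}-1)\,\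mathrm{trace}(\Gamma_\xi)}{2q\|L_k\|_F^2}}.$$
   Context: $\|\cdot\|_F$ denotes the Frobenius norm and $I_d$ the $d\times d$ identity matrix. In the application, $L_k$ is the block of $d$ columns of an EEG lead field matrix associated with source location $k$, $\Gamma_\xi$ is the measurement noise covariance, $q$ is the number of active sources, and $\theta_k$ is the prior variance prescribed by a signal-to-noise-ratio-based sensitivity weighting. *)

theory Defs
  imports "HOL-Analysis.Analysis"
begin

text \<open>Vectors in R^d are modelled as real^'d, matrices in R^(m x d) as real^'d^'m
  (m rows indexed by 'm, d columns indexed by 'd).\<close>

definition l1norm :: "real^'d \<Rightarrow> real" where
  "l1norm x = (\<Sum>i\<in>UNIV. \<bar>x $ i\<bar>)"

definition gamma_density :: "real \<Rightarrow> real \<Rightarrow> real \<Rightarrow> real" where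
  "gamma_density a b g = (if 0 < g then b powr a / Gamma a * g powr (a - 1) * exp (- b * g) else 0)"

definition cond_density :: "real \<Rightarrow> real^'d \<Rightarrow> real" where
  "cond_density g x = (g / 2) ^ CARD('d) * exp (- g * l1norm x)"

definition marginal_density :: "real \<Rightarrow> real \<Rightarrow> real^'d \<Rightarrow> real" where
  "marginal_density a b x = (\<integral>g. gamma_density a b g * cond_density g x \<partial>lborel)"

definition second_moment :: "real \<Rightarrow> real \<Rightarrow> 'd::finite \<Rightarrow> 'd \<Rightarrow> real" where
  "second_moment a b i j = (\<integral>x. (x $ i) * (x $ j) * marginal_density a b x \<partial>(lborel :: (real^'d) measure))"

definition second_moment_integrable :: "real \<Rightarrow> real \<Rightarrow> 'd::finite \<Rightarrow> 'd \<Rightarrow> bool" where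
  "second_moment_integrable a b i j =
     integrable (lborel :: (real^'d) measure) (\<lambda>x. (x $ i) * (x $ j) * marginal_density a b x)"

definition psd_matrix :: "real^'m^'m \<Rightarrow> bool" where
  "psd_matrix A \<longleftrightarrow> transpose A = A \<and> (\<forall>v. 0 \<le> v \<bullet> (A *v v))"

definition frob_norm :: "real^'n^'m \<Rightarrow> real" where
  "frob_norm A = sqrt (\<Sum>i\<in>UNIV. \<Sum>j\<in>UNIV. (A $ i $ j)^2)"

end

theory Submission
  imports Defs
begin



lemma inner_sum_Basis_eq:
  fixes F :: "'a::euclidean_space \<Rightarrow> real"
  assumes "c \<in> Basis"
  shows "(\<Sum>b\<in>Basis. F b *\<^sub>R b) \<bullet> c = F c"
  using assms by (simp add: inner_sum_left inner_Basis if_distrib cong: if_cong)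

lemma lborel_prod_integral:
  fixes f :: "'a::euclidean_space \<Rightarrow> real \<Rightarrow> real"
  assumes int: "\<And>b. b \<in> Basis \<Longrightarrow> integrable lborel (f b)"
  shows "integrable lborel (\<lambda>x::'a. \<Prod>b\<in>Basis. f b (x \<bullet> b))"
    and "(\<integral>x. (\<Prod>b\<in>Basis. f b (x \<bullet> b)) \<partial>(lborel::'a measure)) = (\<Prod>b\<in>Basis. \<integral>t. f b t \<partial>lborel)"
proof -
  interpret product_sigma_finite "\<lambda>_::'a. lborel::real measure" by standard
  have meas: "(\<lambda>F. \<Sum>b\<in>Basis. F b *\<^sub>R b) \<in> measurable (\<Pi>\<^sub>M b\<in>Basis. (lborel::real measure)) (borel::'a measure)"
    by measurable
  have fm[measurable]: "\<And>b. b \<in> Basis \<Longrightarrow> f b \<in> borel_measurable borel"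
    using int by (simp add: borel_measurable_integrable measurable_lborel1 cong: measurable_cong_sets)
  have fm2: "(\<lambda>x::'a. \<Prod>b\<in>Basis. f b (x \<bullet> b)) \<in> borel_measurable borel"
    by measurable
  have eq: "\<And>F. (\<Prod>b\<in>Basis. f b ((\<Sum>b\<in>Basis. F b *\<^sub>R b) \<bullet> b)) = (\<Prod>b\<in>Basis. f b (F b))"
    by (rule prod.cong) (simp_all add: inner_sum_Basis_eq)
  show "integrable lborel (\<lambda>x::'a. \<Prod>b\<in>Basis. f b (x \<bullet> b))"
    apply (subst lborel_eq)
    apply (subst integrable_distr_eq[OF meas fm2])
    apply (simp only: eq)
    by (rule product_integrable_prod) (simp_all add: int)
  show "(\<integral>x. (\<Prod>b\<in>Basis. f b (x \<bullet> b)) \<partial>(lborel::'a measure)) = (\<Prod>b\<in>Basis. \<integral>t. f b t \<partial>lborel)"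
    apply (subst lborel_eq)
    apply (subst integral_distr[OF meas fm2])
    apply (simp only: eq)
    by (rule product_integral_prod) (simp_all add: int)
qed




lemma gamma_int:
  fixes c r :: real
  assumes c: "c > 0" and r: "r > 0"
  shows "has_bochner_integral lborel (\<lambda>g. indicator {0<..} g * (g powr (c-1) * exp (-r*g))) (Gamma c / r powr c)"
proof -
  define h where "h = (\<lambda>g::real. indicator {0<..} g * (g powr (c-1) * exp (-r*g)))"
  have hm[measurable]: "h \<in> borel_measurable borel" unfolding h_def by measurable
  have pw: "r * (indicator {0..} (r*x) * (r*x) powr (c-1) / exp (r*x)) = r powr c * h x" for x
  proof (cases "x > 0")
    case True
    have "r * ((r*x) powr (c-1)) = r powr c * x powr (c-1)"
      using True r by (simp add: powr_mult powr_diff field_simps)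
    then show ?thesis using True r by (simp add: h_def exp_minus field_simps)
  next
    case False
    then show ?thesis using r by (cases "x = 0") (auto simp: h_def indicator_def zero_le_mult_iff)
  qed
  have "ennreal (Gamma c) = (\<integral>\<^sup>+t. ennreal (indicator {0..} t * t powr (c-1) / exp t) \<partial>lborel)"
    using Gamma_conv_nn_integral_real[OF c] by simp
  also have "\<dots> = ennreal \<bar>r\<bar> * (\<integral>\<^sup>+x. ennreal (indicator {0..} (0 + r*x) * (0 + r*x) powr (c-1) / exp (0 + r*x)) \<partial>lborel)"
    by (rule nn_integral_real_affine) (use r in auto)
  also have "\<dots> = (\<integral>\<^sup>+x. ennreal (r * (indicator {0..} (r*x) * (r*x) powr (c-1) / exp (r*x))) \<partial>lborel)"
    using r
    apply (subst nn_integral_cmult[symmetric], simp)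
    apply (rule nn_integral_cong)
    apply (subst ennreal_mult[symmetric])
      apply (auto simp: indicator_def)
    done
  also have "\<dots> = (\<integral>\<^sup>+x. ennreal (r powr c) * ennreal (h x) \<partial>lborel)"
    apply (rule nn_integral_cong)
    apply (subst pw)
    apply (rule ennreal_mult)
    using r by (auto simp: h_def indicator_def)
  also have "\<dots> = ennreal (r powr c) * (\<integral>\<^sup>+x. ennreal (h x) \<partial>lborel)"
    by (rule nn_integral_cmult) simp
  finally have eq: "ennreal (Gamma c) = ennreal (r powr c) * (\<integral>\<^sup>+x. ennreal (h x) \<partial>lborel)" .
  have "(\<integral>\<^sup>+x. ennreal (h x) \<partial>lborel) = ennreal (Gamma c / r powr c)"
  proof -
    have rp: "r powr c > 0" using r by simp
    have "ennreal (Gamma c / r powr c) = ennreal (Gamma c) / ennreal (r powr c)"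
      using rp Gamma_real_pos[OF c] by (simp add: divide_ennreal)
    also have "\<dots> = (\<integral>\<^sup>+x. ennreal (h x) \<partial>lborel)"
      unfolding eq using rp
      by (metis ennreal_eq_0_iff ennreal_mult_divide_eq ennreal_neq_top mult.commute not_le)
    finally show ?thesis by simp
  qed
  moreover have "0 \<le> Gamma c / r powr c" using Gamma_real_pos[OF c] r by simp
  moreover have "AE x in lborel. 0 \<le> h x" unfolding h_def by (auto simp: indicator_def)
  ultimately show ?thesis unfolding h_def[symmetric]
    by (intro has_bochner_integral_nn_integral) auto
qed




lemma half_moment:
  fixes g :: real assumes g: "g > 0"
  shows "has_bochner_integral lborel (\<lambda>t. indicator {0<..} t * (t^n * exp (-g*t))) (fact n / g^(Suc n))"
proof -
  have A: "has_bochner_integral lborel (\<lambda>t. indicator {0<..} t * (t powr (real (Suc n) - 1) * exp (-g*t)))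
          (Gamma (real (Suc n)) / g powr (real (Suc n)))"
    by (rule gamma_int) (use g in auto)
  have B: "Gamma (real (Suc n)) = fact n"
    using Gamma_fact[of n, where 'a=real] by (simp add: add.commute)
  have C: "g powr (real (Suc n)) = g^(Suc n)" by (rule powr_realpow[OF g])
  have D: "(\<lambda>t. indicator {0<..} t * (t powr (real (Suc n) - 1) * exp (-g*t))) =
                   (\<lambda>t. indicator {0<..} t * (t^n * exp (-g*t)))"
    by (auto simp: fun_eq_iff indicator_def powr_realpow)
  show ?thesis using A unfolding B C D .
qed

lemma full_moment:
  fixes g :: real assumes g: "g > 0"
  shows "has_bochner_integral lborel (\<lambda>t. t^n * exp (-g*\<bar>t\<bar>)) (if even n then 2 * fact n / g^(Suc n) else 0)"
    and "has_bochner_integral lborel (\<lambda>t. \<bar>t\<bar>^n * exp (-g*\<bar>t\<bar>)) (2 * fact n / g^(Suc n))"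
proof -
  define h where "h = (\<lambda>t::real. indicator {0<..} t * (t^n * exp (-g*t)))"
  have hm[measurable]: "h \<in> borel_measurable borel" unfolding h_def by measurable
  have H: "has_bochner_integral lborel h (fact n / g^(Suc n))"
    unfolding h_def by (rule half_moment[OF g])
  have Hr: "has_bochner_integral lborel (\<lambda>t. h (-t)) (fact n / g^(Suc n))"
  proof -
    have i1: "integrable lborel (\<lambda>t. h (0 + (-1) * t))"
      using H lborel_integrable_real_affine_iff[of "-1" h 0] by (simp add: has_bochner_integral_iff)
    have "integral\<^sup>L lborel h = \<bar>-1\<bar> *\<^sub>R (\<integral>t. h (0 + (-1) * t) \<partial>lborel)"
      by (rule lborel_integral_real_affine) simp
    then show ?thesis using i1 H by (simp add: has_bochner_integral_iff)
  qed
  have ae: "AE t in lborel. t \<noteq> (0::real)" by (rule AE_lborel_singleton)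
  have "has_bochner_integral lborel (\<lambda>t. h t + (-1)^n * h (-t)) (fact n / g^(Suc n) + (-1)^n * (fact n / g^(Suc n)))"
    by (intro has_bochner_integral_add has_bochner_integral_mult_right H Hr)
  moreover have "fact n / g^(Suc n) + (-1)^n * (fact n / g^(Suc n)) = (if even n then 2 * fact n / g^(Suc n) else 0)"
    by (cases "even n") auto
  moreover have "AE t in lborel. h t + (-1)^n * h (-t) = t^n * exp (-g*\<bar>t\<bar>)"
    using ae
  proof eventually_elim
    case (elim t)
    then show ?case
    proof (cases "t > 0")
      case True then show ?thesis by (simp add: h_def)
    next
      case False
      then have "t < 0" using elim by simp
      have e1: "h (-t) = (-t)^n * exp (g*t)" using \<open>t < 0\<close> by (simp add: h_def)
      have e2: "h t = 0" using \<open>t < 0\<close> by (simp add: h_def)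
      have e3: "\<bar>t\<bar> = -t" using \<open>t < 0\<close> by simp
      have e4: "(-1)^n * (-t)^n = t^n"
        by (subst power_mult_distrib[symmetric]) simp
      have "h t + (-1)^n * h (-t) = ((-1)^n * (-t)^n) * exp (g*t)"
        unfolding e1 e2 by (simp only: mult.assoc add_0_left)
      also have "\<dots> = t^n * exp (-g*\<bar>t\<bar>)" unfolding e4 e3 by simp
      finally show ?thesis .
    qed
  qed
  ultimately show "has_bochner_integral lborel (\<lambda>t. t^n * exp (-g*\<bar>t\<bar>)) (if even n then 2 * fact n / g^(Suc n) else 0)"
    by (subst (asm) has_bochner_integral_cong_AE) auto
  have "has_bochner_integral lborel (\<lambda>t. h t + h (-t)) (fact n / g^(Suc n) + fact n / g^(Suc n))"
    by (intro has_bochner_integral_add H Hr)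
  moreover have "AE t in lborel. h t + h (-t) = \<bar>t\<bar>^n * exp (-g*\<bar>t\<bar>)"
    using ae
  proof eventually_elim
    case (elim t)
    then show ?case
    proof (cases "t > 0")
      case True then show ?thesis by (simp add: h_def)
    next
      case False
      then have "t < 0" using elim by simp
      then show ?thesis by (simp add: h_def)
    qed
  qed
  ultimately show "has_bochner_integral lborel (\<lambda>t. \<bar>t\<bar>^n * exp (-g*\<bar>t\<bar>)) (2 * fact n / g^(Suc n))"
    by (subst (asm) has_bochner_integral_cong_AE) auto
qed




lemma vec_prod_integral:
  fixes f :: "'d::finite \<Rightarrow> real \<Rightarrow> real"
  assumes int: "\<And>k. integrable lborel (f k)"
  shows "integrable lborel (\<lambda>x::real^'d. \<Prod>k\<in>UNIV. f k (x$k))"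
    and "(\<integral>x. (\<Prod>k\<in>UNIV. f k (x$k)) \<partial>(lborel::(real^'d) measure)) = (\<Prod>k\<in>UNIV. \<integral>t. f k t \<partial>lborel)"
proof -
  define F where "F b = f (SOME k. b = axis k (1::real))" for b :: "real^'d"
  have B: "(Basis :: (real^'d) set) = range (\<lambda>k. axis k (1::real))"
    by (auto simp: Basis_vec_def)
  have inj: "inj (\<lambda>k::'d. axis k (1::real))" by (auto simp: inj_on_def axis_eq_axis)
  have Fk: "F (axis k 1) = f k" for k by (simp add: F_def axis_eq_axis)
  have P: "(\<Prod>b\<in>Basis. h b) = (\<Prod>k\<in>UNIV. h (axis k 1))" for h :: "real^'d \<Rightarrow> real"
    by (simp add: B prod.reindex inj)
  have E1: "(\<lambda>x::real^'d. \<Prod>b\<in>Basis. F b (x \<bullet> b)) = (\<lambda>x. \<Prod>k\<in>UNIV. f k (x$k))"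
    by (simp add: P Fk cart_eq_inner_axis)
  have E2: "(\<Prod>b\<in>(Basis::(real^'d) set). \<integral>t. F b t \<partial>lborel) = (\<Prod>k\<in>UNIV. \<integral>t. f k t \<partial>lborel)"
    by (simp add: P Fk)
  have IF: "\<And>b. b \<in> (Basis::(real^'d) set) \<Longrightarrow> integrable lborel (F b)"
    using int by (auto simp: B Fk)
  show "integrable lborel (\<lambda>x::real^'d. \<Prod>k\<in>UNIV. f k (x$k))"
    using lborel_prod_integral(1)[of F, OF IF] unfolding E1 .
  show "(\<integral>x. (\<Prod>k\<in>UNIV. f k (x$k)) \<partial>(lborel::(real^'d) measure)) = (\<Prod>k\<in>UNIV. \<integral>t. f k t \<partial>lborel)"
    using lborel_prod_integral(2)[of F, OF IF] unfolding E1 E2 .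
qed



lemma vec_nth_meas[measurable]: "(\<lambda>x::real^'d. x$i) \<in> borel_measurable borel"
  by (intro borel_measurable_continuous_onI continuous_intros)
lemma l1norm_meas[measurable]: "l1norm \<in> borel_measurable (borel :: (real^'d) measure)"
  unfolding l1norm_def[abs_def] by measurable
lemma gamma_meas[measurable]: "gamma_density a b \<in> borel_measurable borel"
  unfolding gamma_density_def[abs_def] by measurable
lemma cond_meas[measurable]:
  assumes [measurable]: "f \<in> borel_measurable M" "h \<in> borel_measurable M"
  shows "(\<lambda>x. cond_density (f x) (h x::real^'d)) \<in> borel_measurable M"
  unfolding cond_density_def by measurable
lemma F_meas:
  "(\<lambda>(g, x::real^'d). gamma_density a b g * ((x$i * x$j) * cond_density g x)) \<in> borel_measurable (lborel \<Otimes>\<^sub>M lborel)"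
  by measurable



lemma cond_density_prod:
  "cond_density g (x::real^'d) = (g/2)^CARD('d) * (\<Prod>k\<in>UNIV. exp (-g*\<bar>x$k\<bar>))"
  by (simp add: cond_density_def l1norm_def sum_distrib_left exp_sum)

lemma cond_moment:
  fixes g :: real and p :: "'d::finite \<Rightarrow> nat"
  assumes g: "g > 0"
  shows "has_bochner_integral lborel (\<lambda>x::real^'d. (\<Prod>k\<in>UNIV. (x$k)^(p k)) * cond_density g x)
           ((g/2)^CARD('d) * (\<Prod>k\<in>UNIV. if even (p k) then 2*fact (p k)/g^Suc (p k) else 0))"
    and "has_bochner_integral lborel (\<lambda>x::real^'d. (\<Prod>k\<in>UNIV. \<bar>x$k\<bar>^(p k)) * cond_density g x)
           ((g/2)^CARD('d) * (\<Prod>k\<in>UNIV. 2*fact (p k)/g^Suc (p k)))"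
proof -
  have e1: "(\<lambda>x::real^'d. (\<Prod>k\<in>UNIV. (x$k)^(p k)) * cond_density g x) =
        (\<lambda>x. (g/2)^CARD('d) * (\<Prod>k\<in>UNIV. (\<lambda>k t. t^(p k) * exp (-g*\<bar>t\<bar>)) k (x$k)))"
    by (simp add: cond_density_prod prod.distrib fun_eq_iff)
  have e2: "(\<lambda>x::real^'d. (\<Prod>k\<in>UNIV. \<bar>x$k\<bar>^(p k)) * cond_density g x) =
        (\<lambda>x. (g/2)^CARD('d) * (\<Prod>k\<in>UNIV. (\<lambda>k t. \<bar>t\<bar>^(p k) * exp (-g*\<bar>t\<bar>)) k (x$k)))"
    by (simp add: cond_density_prod prod.distrib fun_eq_iff)
  have H1: "has_bochner_integral lborel (\<lambda>t. t^(p k) * exp (-g*\<bar>t\<bar>)) (if even (p k) then 2*fact (p k)/g^Suc (p k) else 0)" for k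
    by (rule full_moment(1)[OF g])
  have H2: "has_bochner_integral lborel (\<lambda>t. \<bar>t\<bar>^(p k) * exp (-g*\<bar>t\<bar>)) (2*fact (p k)/g^Suc (p k))" for k
    by (rule full_moment(2)[OF g])
  show "has_bochner_integral lborel (\<lambda>x::real^'d. (\<Prod>k\<in>UNIV. (x$k)^(p k)) * cond_density g x)
           ((g/2)^CARD('d) * (\<Prod>k\<in>UNIV. if even (p k) then 2*fact (p k)/g^Suc (p k) else 0))"
    unfolding e1
    apply (rule has_bochner_integral_mult_right)
    apply (subst has_bochner_integral_iff)
    using vec_prod_integral[of "\<lambda>k t. t^(p k) * exp (-g*\<bar>t\<bar>)"] H1
    by (auto simp: has_bochner_integral_iff)
  show "has_bochner_integral lborel (\<lambda>x::real^'d. (\<Prod>k\<in>UNIV. \<bar>x$k\<bar>^(p k)) * cond_density g x)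
           ((g/2)^CARD('d) * (\<Prod>k\<in>UNIV. 2*fact (p k)/g^Suc (p k)))"
    unfolding e2
    apply (rule has_bochner_integral_mult_right)
    apply (subst has_bochner_integral_iff)
    using vec_prod_integral[of "\<lambda>k t. \<bar>t\<bar>^(p k) * exp (-g*\<bar>t\<bar>)"] H2
    by (auto simp: has_bochner_integral_iff)
qed

lemma prod_simp:
  fixes g :: real and p :: "'d::finite \<Rightarrow> nat"
  assumes g: "g > 0"
  shows "(g/2)^CARD('d) * (\<Prod>k\<in>UNIV. 2*fact (p k)/g^Suc (p k)) = (\<Prod>k\<in>UNIV. fact (p k)) / g^(\<Sum>k\<in>UNIV. p k)"
proof -
  have "(\<Prod>k\<in>UNIV. 2*fact (p k)/g^Suc (p k)) = (\<Prod>k\<in>UNIV. (2/g) * (fact (p k) / g^(p k)))"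
    by (rule prod.cong) (auto simp: field_simps)
  also have "\<dots> = (2/g)^CARD('d) * ((\<Prod>k\<in>UNIV. fact (p k)) / g^(\<Sum>k\<in>UNIV. p k))"
    by (simp add: prod.distrib prod_dividef power_sum power_divide)
  finally show ?thesis using g by (simp add: power_mult_distrib[symmetric])
qed



lemma marginal_formula:
  fixes a b :: real and x :: "real^'d"
  assumes a: "a > 0" and b: "b > 0"
  shows "marginal_density a b x =
     (b powr a / Gamma a / 2^CARD('d) * Gamma (a + real CARD('d))) * (l1norm x + b) powr (- (real CARD('d) + a))"
proof -
  define s where "s = l1norm x"
  define d where "d = real CARD('d)"
  define K where "K = b powr a / Gamma a / 2^CARD('d)"
  have s0: "s \<ge> 0" unfolding s_def l1norm_def by (simp add: sum_nonneg)
  have H: "has_bochner_integral lborel (\<lambda>g. indicator {0<..} g * (g powr (a + d - 1) * exp (-(b+s)*g)))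
      (Gamma (a + d) / (b+s) powr (a + d))"
    by (rule gamma_int) (use a b s0 in \<open>auto simp: d_def\<close>)
  have pw: "gamma_density a b g * cond_density g x = K * (indicator {0<..} g * (g powr (a + d - 1) * exp (-(b+s)*g)))" for g
  proof (cases "g > 0")
    case True
    have "g powr (a + d - 1) = g powr (a - 1) * g ^ CARD('d)"
      using True by (simp add: d_def powr_add[symmetric] powr_realpow[symmetric] algebra_simps)
    moreover have "exp (- (b + s) * g) = exp (- b * g) * exp (- g * s)" by (simp add: exp_add[symmetric] algebra_simps)
    ultimately show ?thesis using True
      by (simp add: gamma_density_def cond_density_def K_def s_def power_divide)
  next
    case False then show ?thesis by (simp add: gamma_density_def)
  qed
  have "marginal_density a b x = K * (Gamma (a + d) / (b+s) powr (a + d))"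
    unfolding marginal_density_def pw
    using H by (simp add: has_bochner_integral_iff)
  also have "\<dots> = K * Gamma (a + d) * (s + b) powr (- (d + a))"
  proof -
    have "(s + b) powr (- (d + a)) = 1 / (b + s) powr (a + d)"
      by (subst powr_minus_divide) (simp add: add.commute)
    then show ?thesis by simp
  qed
  finally show ?thesis by (simp add: K_def d_def s_def)
qed



lemma P_facts:
  fixes i j :: "'d::finite"
  defines "P \<equiv> (\<lambda>k. (if k = i then 1 else 0) + (if k = j then 1 else (0::nat)))"
  shows "\<And>x::real^'d. x$i * x$j = (\<Prod>k\<in>UNIV. (x$k)^(P k))"
    and "\<And>x::real^'d. \<bar>x$i * x$j\<bar> = (\<Prod>k\<in>UNIV. \<bar>x$k\<bar>^(P k))"
    and "(\<Sum>k\<in>UNIV. P k) = 2"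
    and "(\<Prod>k\<in>UNIV. fact (P k) :: real) = (if i = j then 2 else 1)"
    and "\<And>g::real. g > 0 \<Longrightarrow> (g/2)^CARD('d) * (\<Prod>k\<in>UNIV. if even (P k) then 2*fact (P k)/g^Suc (P k) else 0)
            = (if i = j then 2 / g^2 else 0)"
    and "\<And>g::real. g > 0 \<Longrightarrow> (g/2)^CARD('d) * (\<Prod>k\<in>UNIV. 2*fact (P k)/g^Suc (P k))
            = (if i = j then 2 else 1) / g^2"
proof -
  have pw: "(y::real)^(P k) = (if k = i then y else 1) * (if k = j then y else 1)" for y k
    by (simp add: P_def power_add)
  show "x$i * x$j = (\<Prod>k\<in>UNIV. (x$k)^(P k))" for x :: "real^'d"
    by (simp add: pw prod.distrib prod.delta)
  show "\<bar>x$i * x$j\<bar> = (\<Prod>k\<in>UNIV. \<bar>x$k\<bar>^(P k))" for x :: "real^'d"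
    by (simp add: pw prod.distrib prod.delta abs_mult)
  show S: "(\<Sum>k\<in>UNIV. P k) = 2" by (simp add: P_def sum.distrib)
  show F: "(\<Prod>k\<in>UNIV. fact (P k) :: real) = (if i = j then 2 else 1)"
  proof (cases "i = j")
    case True
    then have "(\<lambda>k. fact (P k) :: real) = (\<lambda>k. if k = i then 2 else 1)"
      by (auto simp: P_def fun_eq_iff)
    then have "(\<Prod>k\<in>UNIV. fact (P k) :: real) = (\<Prod>k\<in>UNIV. if k = i then 2 else 1)"
      using True by (intro prod.cong) (auto simp: P_def)
    also have "\<dots> = 2" by (subst prod.delta) auto
    finally show ?thesis using True by simp
  next
    case False
    have "(\<Prod>k\<in>UNIV. fact (P k) :: real) = 1"
      using False by (intro prod.neutral) (auto simp: P_def)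
    then show ?thesis using False by simp
  qed
  show A: "(g/2)^CARD('d) * (\<Prod>k\<in>UNIV. 2*fact (P k)/g^Suc (P k))
            = (if i = j then 2 else 1) / g^2" if g: "g > 0" for g :: real
    using prod_simp[OF g, of P] S F by simp
  show "(g/2)^CARD('d) * (\<Prod>k\<in>UNIV. if even (P k) then 2*fact (P k)/g^Suc (P k) else 0)
            = (if i = j then 2 / g^2 else 0)" if g: "g > 0" for g :: real
  proof (cases "i = j")
    case True
    then have ev: "even (P k)" for k by (simp add: P_def)
    show ?thesis using A[OF g] True by (simp add: ev)
  next
    case False
    then have Pi: "P i = 1" by (simp add: P_def)
    have "(\<Prod>k\<in>UNIV. if even (P k) then 2*fact (P k)/g^Suc (P k) else (0::real)) = 0"
      apply (rule prod_zero, simp)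
      apply (rule bexI[of _ i])
      using Pi by auto
    then show ?thesis using False by simp
  qed
qed



lemma sm_lemma:
  fixes a b :: real and i j :: "'d::finite"
  assumes a: "a > 2" and b: "b > 0"
  shows "second_moment_integrable a b i j \<and>
         second_moment a b i j = (if i = j then 2 * b^2 / ((a - 1) * (a - 2)) else 0)"
proof -
  define P where "P \<equiv> (\<lambda>k::'d. (if k = i then 1 else 0) + (if k = j then 1 else (0::nat)))"
  note PF = P_facts[where i=i and j=j, folded P_def]
  define G where "G = gamma_density a b"
  define K where "K = b powr a / Gamma a"
  define c0 where "c0 = (if i = j then 2 else 1::real)"
  have G0: "G g = 0" if "\<not> g > 0" for g using that by (simp add: G_def gamma_density_def)
  have Gpos: "G g = K * (g powr (a-1) * exp (-b*g))" if "g > 0" for g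
    using that by (simp add: G_def gamma_density_def K_def)
  have Gnn: "G g \<ge> 0" for g
  proof (cases "g > 0")
    case True
    have "Gamma a > 0" using a by simp
    then show ?thesis using True b by (simp add: Gpos K_def)
  qed (simp add: G0)
  have Gdiv: "G g * (c / g^2) = c * K * (indicator {0<..} g * (g powr (a-2-1) * exp (-b*g)))" if g: "g > 0" for g c
  proof -
    have "g powr (a-2-1) * g powr 2 = g powr (a-1)"
      by (subst powr_add[symmetric]) simp
    moreover have "g powr 2 = g^2" using g by simp
    ultimately have "g powr (a-2-1) * g^2 = g powr (a-1)" by simp
    then show ?thesis using g by (simp add: Gpos field_simps)
  qed
  have CM1: "has_bochner_integral lborel (\<lambda>x::real^'d. x$i*x$j * cond_density g x) (if i=j then 2/g^2 else 0)"
    if g: "g > 0" for g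
  proof -
    have E: "(\<lambda>x::real^'d. (\<Prod>k\<in>UNIV. (x$k)^(P k)) * cond_density g x) = (\<lambda>x. x$i*x$j*cond_density g x)"
      unfolding P_def by (simp add: PF(1))
    have V: "(g/2)^CARD('d) * (\<Prod>k\<in>UNIV. if even (P k) then 2*fact (P k)/g^Suc (P k) else 0)
            = (if i = j then 2 / g^2 else 0)"
      unfolding P_def by (rule PF(5)[OF g])
    show ?thesis using cond_moment(1)[OF g, of P] by (simp only: E V)
  qed
  have CM2: "has_bochner_integral lborel (\<lambda>x::real^'d. \<bar>x$i*x$j\<bar> * cond_density g x) (c0/g^2)"
    if g: "g > 0" for g
  proof -
    have E: "(\<lambda>x::real^'d. (\<Prod>k\<in>UNIV. \<bar>x$k\<bar>^(P k)) * cond_density g x) = (\<lambda>x. \<bar>x$i*x$j\<bar>*cond_density g x)"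
      unfolding P_def by (simp add: PF(2))
    have V: "(g/2)^CARD('d) * (\<Prod>k\<in>UNIV. 2*fact (P k)/g^Suc (P k))
            = (if i = j then 2 else 1) / g^2"
      unfolding P_def by (rule PF(6)[OF g])
    show ?thesis using cond_moment(2)[OF g, of P] by (simp only: E V c0_def)
  qed
  have GI: "has_bochner_integral lborel (\<lambda>g. indicator {0<..} g * (g powr (a-2-1) * exp (-b*g))) (Gamma (a-2) / b powr (a-2))"
    by (rule gamma_int) (use a b in auto)
  define f where "f = (\<lambda>g (x::real^'d). G g * (x$i*x$j * cond_density g x))"
  have PSF: "pair_sigma_finite (lborel::real measure) (lborel::(real^'d) measure)"
    by (intro pair_sigma_finite.intro) (simp_all add: lborel.sigma_finite_measure_axioms)
  have fm: "case_prod f \<in> borel_measurable (lborel \<Otimes>\<^sub>M lborel)"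
    unfolding f_def G_def by (rule F_meas)
  have N: "(\<integral>x. norm (case_prod f (g,x)) \<partial>lborel) = c0 * K * (indicator {0<..} g * (g powr (a-2-1) * exp (-b*g)))" for g
  proof (cases "g > 0")
    case True
    have "(\<lambda>x. norm (case_prod f (g,x))) = (\<lambda>x::real^'d. G g * (\<bar>x$i*x$j\<bar> * cond_density g x))"
      using True Gnn[of g] by (auto simp: f_def fun_eq_iff abs_mult cond_density_def)
    then have "(\<integral>x. norm (case_prod f (g,x)) \<partial>lborel) = G g * (c0/g^2)"
      using has_bochner_integral_integral_eq[OF CM2[OF True]] by simp
    then show ?thesis using Gdiv[OF True] by simp
  next
    case False
    then show ?thesis by (simp add: f_def G0)
  qed
  have integ1: "integrable lborel (\<lambda>g. \<integral>x. norm (case_prod f (g,x)) \<partial>lborel)"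
    unfolding N
    using integrable.intros[OF GI] a b
    by (intro integrable_mult_right) auto
  have integ2: "AE g in lborel. integrable lborel (\<lambda>x. case_prod f (g,x))"
  proof (intro AE_I2)
    fix g :: real
    show "integrable lborel (\<lambda>x. case_prod f (g,x))"
    proof (cases "g > 0")
      case True
      then show ?thesis using integrable.intros[OF CM1[OF True]]
        by (simp add: f_def)
    next
      case False
      then show ?thesis by (simp add: f_def G0)
    qed
  qed
  have intF: "integrable (lborel \<Otimes>\<^sub>M lborel) (case_prod f)"
    by (rule pair_sigma_finite.Fubini_integrable[OF PSF fm integ1 integ2])
  have inner_g: "(\<integral>g. f g x \<partial>lborel) = x$i * x$j * marginal_density a b x" for x
  proof -
    have "(\<lambda>g. f g x) = (\<lambda>g. (x$i * x$j) * (gamma_density a b g * cond_density g x))"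
      by (simp add: f_def G_def fun_eq_iff algebra_simps)
    then show ?thesis by (simp add: marginal_density_def)
  qed
  have I1: "integrable lborel (\<lambda>x::real^'d. \<integral>g. f g x \<partial>lborel)"
    using pair_sigma_finite.integrable_snd[OF PSF intF] .
  then have SMI: "second_moment_integrable a b i j"
    unfolding second_moment_integrable_def inner_g .
  have inner_x: "(\<integral>x. f g x \<partial>lborel) = (if i = j then 2 * K * (indicator {0<..} g * (g powr (a-2-1) * exp (-b*g))) else 0)" for g
  proof (cases "g > 0")
    case True
    have "(\<integral>x. f g x \<partial>lborel) = G g * (if i=j then 2/g^2 else 0)"
      using has_bochner_integral_integral_eq[OF CM1[OF True]] by (simp add: f_def)
    then show ?thesis using Gdiv[OF True, of 2] by simp
  next
    case False
    then show ?thesis by (simp add: f_def G0)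
  qed
  have "second_moment a b i j = (\<integral>x. (\<integral>g. f g x \<partial>lborel) \<partial>lborel)"
    unfolding second_moment_def inner_g ..
  also have "\<dots> = integral\<^sup>L (lborel \<Otimes>\<^sub>M lborel) (case_prod f)"
    by (rule pair_sigma_finite.integral_snd[OF PSF intF])
  also have "\<dots> = (\<integral>g. (\<integral>x. f g x \<partial>lborel) \<partial>lborel)"
    by (rule pair_sigma_finite.integral_fst[OF PSF intF, symmetric])
  also have "\<dots> = (if i = j then 2 * K * (Gamma (a-2) / b powr (a-2)) else 0)"
    unfolding inner_x
    using has_bochner_integral_integral_eq[OF GI] a b by simp
  also have "\<dots> = (if i = j then 2 * b^2 / ((a - 1) * (a - 2)) else 0)"
  proof -
    have np: "z > 0 \<Longrightarrow> z \<notin> \<int>\<^sub>\<le>\<^sub>0" for z :: real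
      using nonpos_Ints_nonpos by fastforce
    have g1: "Gamma (a-2+1) = (a-2) * Gamma (a-2)" by (rule Gamma_plus1) (use np a in auto)
    have g2: "Gamma (a-1+1) = (a-1) * Gamma (a-1)" by (rule Gamma_plus1) (use np a in auto)
    have ga: "Gamma a = (a-1) * (a-2) * Gamma (a-2)"
      using g1 g2 by simp
    have "b powr (a-2) * b powr 2 = b powr a"
      by (subst powr_add[symmetric]) simp
    moreover have "b powr 2 = b^2" using b by simp
    ultimately have bp: "b powr a = b powr (a-2) * b^2" by simp
    have a2: "a - 2 > 0" using a by simp
    have "Gamma (a-2) > 0" by (rule Gamma_real_pos[OF a2])
    then have G2: "Gamma (a-2) \<noteq> 0" by linarith
    have P2: "b powr (a-2) \<noteq> 0" using b by simp
    have A1: "a - 1 \<noteq> 0" "a - 2 \<noteq> 0" using a by auto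
    have "2 * K * (Gamma (a-2) / b powr (a-2)) = 2 * b^2 / ((a - 1) * (a - 2))"
      unfolding K_def ga bp using G2 P2 A1 by (simp add: divide_simps)
    then show ?thesis by simp
  qed
  finally show ?thesis using SMI by simp
qed



theorem mainTheorem1:
  fixes a b SNR :: real and q :: nat
    and Gxi :: "real^'m^'m" and L :: "real^'d^'m"
  assumes a_gt: "a > 2" and b_pos: "b > 0"
  shows "(\<exists>C>0. \<forall>x::real^'d. marginal_density a b x = C * (l1norm x + b) powr (- (real CARD('d) + a)))
    \<and> (\<forall>i j::'d. second_moment_integrable a b i j \<and>
          second_moment a b i j = (if i = j then 2 * b^2 / ((a - 1) * (a - 2)) else 0))
    \<and> (SNR > 1 \<longrightarrow> psd_matrix Gxi \<longrightarrow> Gxi \<noteq> 0 \<longrightarrow> q \<ge> 1 \<longrightarrow> L \<noteq> 0 \<longrightarrow>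
        ((\<forall>i j::'d. second_moment a b i j =
            (if i = j then (SNR - 1) * trace Gxi / (real q * (frob_norm L)^2) else 0))
         \<longleftrightarrow> b = sqrt ((a - 1) * (a - 2) * (SNR - 1) * trace Gxi / (2 * real q * (frob_norm L)^2))))"
proof -
  have a0: "a > 0" using a_gt by simp
  define C where "C = b powr a / Gamma a / 2^CARD('d) * Gamma (a + real CARD('d))"
  have "Gamma a > 0" using a0 by simp
  moreover have "Gamma (a + real CARD('d)) > 0" using a0 by (intro Gamma_real_pos) simp
  ultimately have C0: "C > 0" using b_pos by (simp add: C_def)
  have P1: "\<exists>C>0. \<forall>x::real^'d. marginal_density a b x = C * (l1norm x + b) powr (- (real CARD('d) + a))"
    using C0 marginal_formula[OF a0 b_pos] unfolding C_def by blast
  have P2: "\<forall>i j::'d. second_moment_integrable a b i j \<and>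
          second_moment a b i j = (if i = j then 2 * b^2 / ((a - 1) * (a - 2)) else 0)"
    using sm_lemma[OF a_gt b_pos] by blast
  define \<theta> where "\<theta> = (SNR - 1) * trace Gxi / (real q * (frob_norm L)^2)"
  define X where "X = (a - 1) * (a - 2) * (SNR - 1) * trace Gxi / (2 * real q * (frob_norm L)^2)"
  have X: "X = (a - 1) * (a - 2) / 2 * \<theta>"
    unfolding X_def \<theta>_def by (simp only: times_divide_eq_left times_divide_eq_right divide_divide_eq_left mult.assoc mult.left_commute mult.commute)
  have A1: "(a - 1) * (a - 2) > 0" using a_gt by simp
  have E1: "(\<forall>i j::'d. second_moment a b i j = (if i = j then \<theta> else 0)) \<longleftrightarrow> 2 * b^2 / ((a - 1) * (a - 2)) = \<theta>"
  proof
    assume "\<forall>i j::'d. second_moment a b i j = (if i = j then \<theta> else 0)"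
    then have "second_moment a b (undefined::'d) undefined = \<theta>" by simp
    then show "2 * b^2 / ((a - 1) * (a - 2)) = \<theta>" using P2 by simp
  next
    assume "2 * b^2 / ((a - 1) * (a - 2)) = \<theta>"
    then show "\<forall>i j::'d. second_moment a b i j = (if i = j then \<theta> else 0)" using P2 by simp
  qed
  have E2: "2 * b^2 / ((a - 1) * (a - 2)) = \<theta> \<longleftrightarrow> b^2 = X"
  proof -
    have "2 * b^2 / ((a - 1) * (a - 2)) = \<theta> \<longleftrightarrow> 2 * b^2 = \<theta> * ((a - 1) * (a - 2))"
      using A1 a_gt by (simp add: divide_eq_eq)
    also have "\<dots> \<longleftrightarrow> b^2 = (a - 1) * (a - 2) / 2 * \<theta>" using a_gt by (auto simp: field_simps)
    finally show ?thesis unfolding X .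
  qed
  have E3: "b^2 = X \<longleftrightarrow> b = sqrt X"
  proof
    assume h: "b^2 = X"
    have "sqrt X = sqrt (b^2)" using h by simp
    also have "\<dots> = \<bar>b\<bar>" by (rule real_sqrt_abs)
    finally show "b = sqrt X" using b_pos by simp
  next
    assume h: "b = sqrt X"
    then have "X \<ge> 0" using b_pos by (cases "X \<ge> 0") auto
    then show "b^2 = X" using h by simp
  qed
  have P3: "(\<forall>i j::'d. second_moment a b i j = (if i = j then \<theta> else 0)) \<longleftrightarrow> b = sqrt X"
    using E1 E2 E3 by simp
  show ?thesis using P1 P2 P3 unfolding \<theta>_def X_def by blast
qed


end
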